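(* Let $G$ be a weighted planar graph with strictly positive edge weights in which shortest paths are unique. Let $R_{i+1}$ be a region (edge-induced subgraph) of $G$ whose boundary vertex set $\partial R_{i+1}$ lies on a single simple cycle $C$ bounding a face (hole) of $R_{i+1}$, and let $R_{i+1}^{\operatorname{out}}$ denote the subgraph of $G$ induced by the edges lying on the side of $C$ not containing $R_{i+1}$, together with $C$. Let $R_i$ be a subregion of $R_{i+1}$ (a region of the next-finer level of the hierarchical division whose edges are contained in $R_{i+1}$), let $q\in\partial R_i$, and let $v$ be a vertex with $v\notin R_{i+1}$. Consider the additively weighted Voronoi diagram of $R_{i+1}^{\operatorname{out}}$ with site set $\partial R_{i+1}$ and weights $\omega(s)=\operatorname{dist}_G(q,s)$. Then $v\in\operatorname{Vor}(s)$ if and only if $s$ is the last vertex of $\partial R_{i+1}$ on the shortest path from $q$ to $v$ in $G$; moreover, for this $s$, $d^\omega(s,v)=\operatorname{dist}_G(q,v)$.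
   Context: For a region $R$ of a division of $G$ (a collection of edge-induced subgraphs whose union is $G$), $\partial R$ is the set of vertices of $R$ that belong to more than one region. Additively weighted Voronoi diagram: given a graph $H$, a set $S$ of sites on a face of $H$, and weights $\omega:S\to\mathbb{R}_{\ge 0}$, define $d^\omega(s,v)=\omega(s)+\operatorname{dist}_H(s,v)$ for $s\in S$, $v\in V(H)$, and $\operatorname{Vor}(s)=\{v\in V(H) : \forall s'\neq s,\ (d^\omega(s,v),-\omega(s)) < (d^\omega(s',v),-\omega(s'))\}$, where pairs are compared lexicographically (i.e., ties in distance are broken in favor of larger $\omega$). Here $H=R_{i+1}^{\operatorname{out}}$, so distances in $d^\omega$ are measured in $R_{i+1}^{\operatorname{out}}$. *)

theory Defs
  imports "HOL-Analysis.Analysis"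
begin

text \<open>Undirected weighted graphs: a graph is given by its edge set E, each edge a
2-element vertex set; the vertex set is the union of E.  Weights are w :: 'v set => real.\<close>

definition ugraph :: "'v set set \<Rightarrow> bool" where
  "ugraph E \<longleftrightarrow> finite E \<and> (\<forall>e\<in>E. \<exists>a b. a \<noteq> b \<and> e = {a, b})"

definition walk :: "'v set set \<Rightarrow> 'v list \<Rightarrow> bool" where
  "walk E xs \<longleftrightarrow> xs \<noteq> [] \<and> (\<forall>i < length xs - 1. {xs ! i, xs ! Suc i} \<in> E)"

definition walk_len :: "('v set \<Rightarrow> real) \<Rightarrow> 'v list \<Rightarrow> real" where
  "walk_len w xs = (\<Sum>i < length xs - 1. w {xs ! i, xs ! Suc i})"

definition wdist :: "'v set set \<Rightarrow> ('v set \<Rightarrow> real) \<Rightarrow> 'v \<Rightarrow> 'v \<Rightarrow> ereal" where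
  "wdist E w x y = (INF xs \<in> {xs. walk E xs \<and> hd xs = x \<and> last xs = y}. ereal (walk_len w xs))"

definition shortest_path :: "'v set set \<Rightarrow> ('v set \<Rightarrow> real) \<Rightarrow> 'v \<Rightarrow> 'v \<Rightarrow> 'v list \<Rightarrow> bool" where
  "shortest_path E w x y P \<longleftrightarrow> walk E P \<and> distinct P \<and> hd P = x \<and> last P = y
      \<and> ereal (walk_len w P) = wdist E w x y"

definition unique_shortest_paths :: "'v set set \<Rightarrow> ('v set \<Rightarrow> real) \<Rightarrow> bool" where
  "unique_shortest_paths E w \<longleftrightarrow>
     (\<forall>x y P P'. shortest_path E w x y P \<and> shortest_path E w x y P' \<longrightarrow> P = P')"

definition gconnected :: "'v set set \<Rightarrow> bool" where
  "gconnected E \<longleftrightarrow> (\<forall>x\<in>\<Union>E. \<forall>y\<in>\<Union>E. \<exists>xs. walk E xs \<and> hd xs = x \<and> last xs = y)"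

definition division :: "'v set set \<Rightarrow> 'v set set set \<Rightarrow> bool" where
  "division E D \<longleftrightarrow> (\<forall>R\<in>D. R \<subseteq> E) \<and> \<Union>D = E"

definition bnd :: "'v set set set \<Rightarrow> 'v set set \<Rightarrow> 'v set" where
  "bnd D R = {x \<in> \<Union>R. \<exists>R'\<in>D. R' \<noteq> R \<and> x \<in> \<Union>R'}"

definition plane_embedding :: "'v set set \<Rightarrow> ('v \<Rightarrow> complex) \<Rightarrow> ('v set \<Rightarrow> real \<Rightarrow> complex) \<Rightarrow> bool" where
  "plane_embedding E pos \<gamma> \<longleftrightarrow>
     inj_on pos (\<Union>E) \<and>
     (\<forall>e\<in>E. arc (\<gamma> e) \<and> {pathstart (\<gamma> e), pathfinish (\<gamma> e)} = pos ` e) \<and>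
     (\<forall>e\<in>E. path_image (\<gamma> e) \<inter> pos ` (\<Union>E) = pos ` e) \<and>
     (\<forall>e\<in>E. \<forall>e'\<in>E. e \<noteq> e' \<longrightarrow> path_image (\<gamma> e) \<inter> path_image (\<gamma> e') \<subseteq> pos ` (e \<inter> e'))"

definition img :: "('v set \<Rightarrow> real \<Rightarrow> complex) \<Rightarrow> 'v set set \<Rightarrow> complex set" where
  "img \<gamma> R = (\<Union>e\<in>R. path_image (\<gamma> e))"

definition cyc_edges :: "'v list \<Rightarrow> 'v set set" where
  "cyc_edges cs = {{cs ! i, cs ! ((i + 1) mod length cs)} | i. i < length cs}"

definition simple_cycle :: "'v set set \<Rightarrow> 'v list \<Rightarrow> bool" where
  "simple_cycle E cs \<longleftrightarrow> distinct cs \<and> length cs \<ge> 3 \<and> cyc_edges cs \<subseteq> E"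

definition face_bounded_by :: "('v set \<Rightarrow> real \<Rightarrow> complex) \<Rightarrow> 'v set set \<Rightarrow> 'v list \<Rightarrow> complex set \<Rightarrow> bool" where
  "face_bounded_by \<gamma> R cs F \<longleftrightarrow> F \<in> components (- img \<gamma> R) \<and> frontier F = img \<gamma> (cyc_edges cs)"

text \<open>R^out: edges of G on the side of C not containing R (the face F), together with C.\<close>
definition rout :: "'v set set \<Rightarrow> ('v set \<Rightarrow> real \<Rightarrow> complex) \<Rightarrow> complex set \<Rightarrow> 'v set set" where
  "rout E \<gamma> F = {e \<in> E. path_image (\<gamma> e) \<subseteq> closure F}"

definition dw :: "'v set set \<Rightarrow> ('v set \<Rightarrow> real) \<Rightarrow> ('v \<Rightarrow> ereal) \<Rightarrow> 'v \<Rightarrow> 'v \<Rightarrow> ereal" where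
  "dw H w \<omega> s x = \<omega> s + wdist H w s x"

definition lexless :: "ereal \<times> ereal \<Rightarrow> ereal \<times> ereal \<Rightarrow> bool" where
  "lexless p p' \<longleftrightarrow> fst p < fst p' \<or> (fst p = fst p' \<and> snd p < snd p')"

definition Vor :: "'v set set \<Rightarrow> ('v set \<Rightarrow> real) \<Rightarrow> 'v set \<Rightarrow> ('v \<Rightarrow> ereal) \<Rightarrow> 'v \<Rightarrow> 'v set" where
  "Vor H w S \<omega> s = {x \<in> \<Union>H. \<forall>s'\<in>S. s' \<noteq> s \<longrightarrow>
       lexless (dw H w \<omega> s x, - \<omega> s) (dw H w \<omega> s' x, - \<omega> s')}"

end

theory Submission
  imports Defs
begin

lemma walk_single[simp]: "walk E [x]" by (simp add: walk_def)
lemma walk_Nil[simp]: "\<not> walk E []" by (simp add: walk_def)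
lemma walk_len_single[simp]: "walk_len w [x] = 0" by (simp add: walk_len_def)

lemma walk_Cons2[simp]: "walk E (x # y # xs) \<longleftrightarrow> {x,y} \<in> E \<and> walk E (y # xs)"
  unfolding walk_def by (auto simp: less_Suc_eq_0_disj)

lemma walk_len_Cons2[simp]: "walk_len w (x # y # xs) = w {x,y} + walk_len w (y # xs)"
  unfolding walk_len_def by (simp del: sum.lessThan_Suc add: sum.lessThan_Suc_shift)

lemma walk_append: "walk E (xs @ y # ys) \<longleftrightarrow> walk E (xs @ [y]) \<and> walk E (y # ys)"
proof (induction xs)
  case (Cons a xs) then show ?case by (cases xs) auto
qed simp

lemma walk_len_append: "walk_len w (xs @ y # ys) = walk_len w (xs @ [y]) + walk_len w (y # ys)"
proof (induction xs)
  case (Cons a xs) then show ?case by (cases xs) auto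
qed simp

lemma walk_mono: "walk E1 xs \<Longrightarrow> E1 \<subseteq> E2 \<Longrightarrow> walk E2 xs"
  unfolding walk_def by blast

lemma walk_len_nonneg: "\<forall>e\<in>E. w e > 0 \<Longrightarrow> walk E xs \<Longrightarrow> walk_len w xs \<ge> 0"
proof (induction xs rule: induct_list012)
  case (3 x y zs) then show ?case by (fastforce intro: add_nonneg_nonneg less_imp_le)
qed auto

lemma walk_len_pos: "\<forall>e\<in>E. w e > 0 \<Longrightarrow> walk E (x # y # zs) \<Longrightarrow> walk_len w (x # y # zs) > 0"
  using walk_len_nonneg[of E w "y # zs"] by (auto intro: add_pos_nonneg)

lemma walk_set: "walk E xs \<Longrightarrow> set xs \<subseteq> insert (hd xs) (\<Union>E)"
proof (induction xs rule: induct_list012)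
  case (3 x y zs) then show ?case by auto
qed auto

lemma wdist_le: "walk E W \<Longrightarrow> hd W = x \<Longrightarrow> last W = y \<Longrightarrow> wdist E w x y \<le> ereal (walk_len w W)"
  unfolding wdist_def by (rule INF_lower) auto

lemma wdist_empty: "\<not> (\<exists>W. walk E W \<and> hd W = x \<and> last W = y) \<Longrightarrow> wdist E w x y = \<infinity>"
proof -
  assume "\<not> (\<exists>W. walk E W \<and> hd W = x \<and> last W = y)"
  then have e: "{xs. walk E xs \<and> hd xs = x \<and> last xs = y} = {}" by auto
  show ?thesis unfolding wdist_def e by (simp add: top_ereal_def)
qed

lemma shorten:
  assumes pos: "\<forall>e\<in>E. w e > 0" and W: "walk E W" and nd: "\<not> distinct W"
  shows "\<exists>W'. walk E W' \<and> hd W' = hd W \<and> last W' = last W \<and> walk_len w W' < walk_len w W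
     \<and> length W' < length W"
proof -
  obtain a b c u where Wd: "W = a @ [u] @ b @ [u] @ c" using not_distinct_decomp[OF nd] by blast
  have W2: "W = a @ u # ((b @ [u]) @ c)" using Wd by simp
  have "walk E (a @ [u])" "walk E (u # b @ u # c)" using W W2 walk_append[of E a u "b @ u # c"] by auto
  moreover have "walk E ((u # b) @ [u])" "walk E (u # c)"
    using walk_append[of E "u # b" u c] calculation(2) by auto
  ultimately have w1: "walk E (a @ u # c)" using walk_append[of E a u c] by blast
  have l1: "walk_len w W = walk_len w (a @ [u]) + (walk_len w ((u # b) @ [u]) + walk_len w (u # c))"
    using Wd walk_len_append[of w a u "b @ u # c"] walk_len_append[of w "u # b" u c] by simp
  have "walk_len w ((u # b) @ [u]) > 0"
    using walk_len_pos[OF pos, of u "hd (b @ [u])" "tl (b @ [u])"] \<open>walk E ((u # b) @ [u])\<close>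
    by (cases b) auto
  then have "walk_len w (a @ u # c) < walk_len w W" using l1 walk_len_append[of w a u c] by simp
  moreover have "hd (a @ u # c) = hd W" "last (a @ u # c) = last W" using Wd by (cases a; simp)+
  moreover have "length (a @ u # c) < length W" using Wd by simp
  ultimately show ?thesis using w1 by blast
qed

lemma exists_shortest:
  assumes fin: "finite (\<Union>E)" and pos: "\<forall>e\<in>E. w e > 0"
    and W: "walk E W" "hd W = x" "last W = y"
  shows "\<exists>P. walk E P \<and> distinct P \<and> hd P = x \<and> last P = y \<and> wdist E w x y = ereal (walk_len w P)"
proof -
  define D where "D = {P. walk E P \<and> distinct P \<and> hd P = x \<and> last P = y}"
  have red: "\<exists>P\<in>D. walk_len w P \<le> walk_len w W'" if "walk E W'" "hd W' = x" "last W' = y" for W'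
    using that
  proof (induction W' rule: length_induct)
    case (1 W')
    show ?case
    proof (cases "distinct W'")
      case True then show ?thesis using 1(2-4) unfolding D_def by auto
    next
      case False
      then obtain W2 where "walk E W2" "hd W2 = hd W'" "last W2 = last W'"
        "walk_len w W2 < walk_len w W'" "length W2 < length W'"
        using shorten[OF pos 1(2)] by blast
      then show ?thesis using 1 by (metis less_imp_le order_trans)
    qed
  qed
  have "D \<subseteq> {xs. set xs \<subseteq> insert x (\<Union>E) \<and> length xs \<le> card (insert x (\<Union>E))}"
  proof
    fix P assume "P \<in> D"
    then have P: "walk E P" "distinct P" "hd P = x" unfolding D_def by auto
    have s: "set P \<subseteq> insert x (\<Union>E)" using walk_set[OF P(1)] P(3) by simp
    have "length P = card (set P)" using P(2) by (simp add: distinct_card)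
    also have "\<dots> \<le> card (insert x (\<Union>E))" using s fin by (simp add: card_mono)
    finally show "P \<in> {xs. set xs \<subseteq> insert x (\<Union>E) \<and> length xs \<le> card (insert x (\<Union>E))}"
      using s by simp
  qed
  then have finD: "finite D" using finite_lists_length_le[of "insert x (\<Union>E)"] fin
    by (meson finite_insert finite_subset)
  have neD: "D \<noteq> {}" using red[OF W] by auto
  have "Min (walk_len w ` D) \<in> walk_len w ` D" using finD neD by simp
  then obtain P0 where P0: "P0 \<in> D" "walk_len w P0 = Min (walk_len w ` D)" by auto
  have mn: "walk_len w P0 \<le> walk_len w P" if "P \<in> D" for P
    using P0(2) finD that by simp
  have "wdist E w x y = ereal (walk_len w P0)"
  proof (rule antisym)
    show "wdist E w x y \<le> ereal (walk_len w P0)" using P0(1) unfolding D_def by (auto intro: wdist_le)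
    show "ereal (walk_len w P0) \<le> wdist E w x y" unfolding wdist_def
    proof (rule INF_greatest)
      fix xs assume "xs \<in> {xs. walk E xs \<and> hd xs = x \<and> last xs = y}"
      then obtain P where "P \<in> D" "walk_len w P \<le> walk_len w xs" using red by blast
      then show "ereal (walk_len w P0) \<le> ereal (walk_len w xs)" using mn by force
    qed
  qed
  then show ?thesis using P0(1) unfolding D_def by blast
qed

lemma walk_concat:
  assumes "walk E W1" "walk E W2" "last W1 = hd W2"
  shows "walk E (butlast W1 @ W2) \<and> walk_len w (butlast W1 @ W2) = walk_len w W1 + walk_len w W2
    \<and> hd (butlast W1 @ W2) = hd W1 \<and> last (butlast W1 @ W2) = last W2"
proof -
  have e1: "W1 = butlast W1 @ [hd W2]" using assms(1,3) by (metis append_butlast_last_id walk_Nil)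
  have e2: "W2 = hd W2 # tl W2" using assms(2) by (metis list.collapse walk_Nil)
  have eq: "butlast W1 @ W2 = butlast W1 @ hd W2 # tl W2" using e2 by simp
  show ?thesis
    unfolding eq using walk_append[of E "butlast W1" "hd W2" "tl W2"] walk_len_append[of w "butlast W1" "hd W2" "tl W2"]
      assms e1 e2
    by (metis append_Cons append_self_conv2 hd_append2 last_ConsR last_appendR list.distinct(1) list.sel(1) not_Cons_self2 snoc_eq_iff_butlast)
qed

lemma walk_hits_bnd:
  assumes D: "division E D" "R \<in> D"
  shows "walk E xs \<Longrightarrow> hd xs \<in> \<Union>R \<Longrightarrow> last xs \<notin> \<Union>R \<Longrightarrow> \<exists>x\<in>set xs. x \<in> bnd D R"
proof (induction xs rule: induct_list012)
  case (3 x y zs)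
  show ?case
  proof (cases "x \<in> bnd D R")
    case True then show ?thesis by simp
  next
    case False
    have "{x,y} \<in> E" using 3 by simp
    then obtain R' where "R' \<in> D" "{x,y} \<in> R'" using D unfolding division_def by blast
    then have "R' = R" using False 3(4) unfolding bnd_def by auto
    then have "y \<in> \<Union>R" using \<open>{x,y} \<in> R'\<close> by blast
    then show ?thesis using 3 by auto
  qed
qed auto

lemma walk_stays:
  assumes D: "division E D" "R \<in> D"
  shows "walk E xs \<Longrightarrow> hd xs \<in> \<Union>R \<Longrightarrow> set xs \<inter> bnd D R = {} \<Longrightarrow> last xs \<in> \<Union>R"
  using walk_hits_bnd[OF D] by fastforce

lemma edge_in_closure:
  assumes pe: "plane_embedding E pos \<gamma>" and eE: "e \<in> E" and eR: "e \<notin> R" and RE: "R \<subseteq> E"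
    and finR: "finite R" and F: "F \<in> components (- img \<gamma> R)" and ye: "y \<in> e" and yF: "pos y \<in> F"
  shows "path_image (\<gamma> e) \<subseteq> closure F"
proof -
  define g where "g = \<gamma> e"
  have arc: "arc g" and ends: "{pathstart g, pathfinish g} = pos ` e"
    using pe eE unfolding plane_embedding_def g_def by auto
  have pg: "path g" using arc by (simp add: arc_imp_path)
  have inj: "inj_on g {0..1}" using arc by (simp add: arc_def)
  have cont: "continuous_on {0..1} g" using pg by (simp add: path_def)
  define Oa where "Oa = g ` {0<..<1}"
  have disj: "Oa \<inter> img \<gamma> R = {}"
  proof (rule ccontr)
    assume "Oa \<inter> img \<gamma> R \<noteq> {}"
    then obtain t e'' where t: "t \<in> {0<..<1}" and e'': "e'' \<in> R" "g t \<in> path_image (\<gamma> e'')"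
      unfolding Oa_def img_def by blast
    have "e'' \<noteq> e" using eR e'' by blast
    have "g t \<in> path_image g" using t unfolding path_image_def by auto
    have pe4: "\<forall>e\<in>E. \<forall>e'\<in>E. e \<noteq> e' \<longrightarrow> path_image (\<gamma> e) \<inter> path_image (\<gamma> e') \<subseteq> pos ` (e \<inter> e')"
      using pe unfolding plane_embedding_def by (elim conjE)
    have "e'' \<in> E" using e'' RE by blast
    have "path_image g \<inter> path_image (\<gamma> e'') \<subseteq> pos ` (e \<inter> e'')"
      using pe4 eE \<open>e'' \<in> E\<close> \<open>e'' \<noteq> e\<close> unfolding g_def by metis
    then have "g t \<in> pos ` (e \<inter> e'')" using \<open>g t \<in> path_image g\<close> e''(2) by blast
    then have "g t \<in> pos ` e" by blast
    then have "g t = g 0 \<or> g t = g 1" using ends unfolding pathstart_def pathfinish_def by blast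
    moreover have t01: "t \<in> {0..1}" using t by simp
    moreover have "(0::real) \<in> {0..1}" "(1::real) \<in> {0..1}" by simp_all
    ultimately have "t = 0 \<or> t = 1" using inj_onD[OF inj] by metis
    then show False using t by simp
  qed
  have conO: "connected Oa" unfolding Oa_def
    by (rule connected_continuous_image) (auto intro: continuous_on_subset[OF cont])
  have "closed (img \<gamma> R)" unfolding img_def
  proof (rule closed_UN[OF finR], rule ballI)
    fix e' assume "e' \<in> R"
    then have "arc (\<gamma> e')" using pe RE unfolding plane_embedding_def by auto
    then show "closed (path_image (\<gamma> e'))" by (simp add: arc_imp_path closed_path_image)
  qed
  then have opF: "open F" using F open_components by blast
  have "path_image g \<subseteq> closure Oa"
  proof -
    have c1: "continuous_on (closure {0<..<1::real}) g" using cont by simp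
    have "g ` closure {0<..<1::real} \<subseteq> closure Oa"
      by (rule image_closure_subset[OF c1]) (simp_all add: Oa_def closure_subset)
    then show ?thesis unfolding path_image_def by simp
  qed
  moreover have "pos y \<in> path_image g"
  proof -
    have "pos y \<in> {pathstart g, pathfinish g}" using ends ye by auto
    then show ?thesis using pathstart_in_path_image pathfinish_in_path_image by auto
  qed
  ultimately have "F \<inter> closure Oa \<noteq> {}" using yF by blast
  then have "F \<inter> Oa \<noteq> {}" using open_Int_closure_eq_empty[OF opF] by blast
  then have "Oa \<subseteq> F" using components_maximal[OF F conO] disj by blast
  then have "closure Oa \<subseteq> closure F" by (rule closure_mono)
  then show ?thesis using \<open>path_image g \<subseteq> closure Oa\<close> g_def by blast
qed

lemma vertex_in_F:
  assumes pe: "plane_embedding E pos \<gamma>" and yV: "y \<in> \<Union>E" and yR: "y \<notin> \<Union>R" and RE: "R \<subseteq> E"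
    and fr: "frontier F = img \<gamma> (cyc_edges C)" and cR: "cyc_edges C \<subseteq> R"
    and e: "e \<in> rout E \<gamma> F" "y \<in> e"
  shows "pos y \<in> F"
proof -
  have eE: "e \<in> E" and ecl: "path_image (\<gamma> e) \<subseteq> closure F" using e(1) unfolding rout_def by simp_all
  have pe2: "\<forall>e\<in>E. arc (\<gamma> e) \<and> {pathstart (\<gamma> e), pathfinish (\<gamma> e)} = pos ` e"
    using pe unfolding plane_embedding_def by (elim conjE)
  have pe3: "\<forall>e\<in>E. path_image (\<gamma> e) \<inter> pos ` (\<Union>E) = pos ` e"
    using pe unfolding plane_embedding_def by (elim conjE)
  have inj: "inj_on pos (\<Union>E)"
    using pe unfolding plane_embedding_def by (elim conjE)
  have "{pathstart (\<gamma> e), pathfinish (\<gamma> e)} = pos ` e" using pe2 eE by blast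
  then have "pos y \<in> {pathstart (\<gamma> e), pathfinish (\<gamma> e)}" using e(2) by simp
  then have "pos y \<in> path_image (\<gamma> e)" using pathstart_in_path_image pathfinish_in_path_image by auto
  then have cl: "pos y \<in> closure F" using ecl by (rule subsetD[rotated])
  have "pos y \<notin> img \<gamma> R"
  proof
    assume "pos y \<in> img \<gamma> R"
    then obtain e'' where e'': "e'' \<in> R" "pos y \<in> path_image (\<gamma> e'')" unfolding img_def by blast
    have "e'' \<in> E" using e'' RE by blast
    then have "path_image (\<gamma> e'') \<inter> pos ` (\<Union>E) = pos ` e''" using pe3 by blast
    moreover have "pos y \<in> pos ` (\<Union>E)" using yV by simp
    ultimately have "pos y \<in> pos ` e''" using e''(2) by blast
    then obtain z where z: "z \<in> e''" "pos y = pos z" by blast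
    have "z \<in> \<Union>E" using z(1) \<open>e'' \<in> E\<close> by blast
    then have "y = z" using inj_onD[OF inj z(2) yV] by simp
    then show False using yR e''(1) z(1) by blast
  qed
  moreover have "img \<gamma> (cyc_edges C) \<subseteq> img \<gamma> R" using cR unfolding img_def by (rule UN_mono) simp
  ultimately have "pos y \<notin> frontier F" using fr by blast
  then have "pos y \<in> interior F" using cl unfolding frontier_def by simp
  then show ?thesis using interior_subset by blast
qed

lemma suffix_in_rout:
  assumes pe: "plane_embedding E pos \<gamma>" and RE: "R \<subseteq> E" and finR: "finite R"
    and F: "F \<in> components (- img \<gamma> R)"
    and fr: "frontier F = img \<gamma> (cyc_edges C)" and cR: "cyc_edges C \<subseteq> R"
  shows "walk E xs \<Longrightarrow> (\<forall>y\<in>set (tl xs). y \<notin> \<Union>R) \<Longrightarrow> pos (last xs) \<in> F \<Longrightarrow> walk (rout E \<gamma> F) xs"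
proof (induction xs rule: induct_list012)
  case (3 x y zs)
  have wyz: "walk (rout E \<gamma> F) (y # zs)" using 3 by simp
  have xyE: "{x,y} \<in> E" using 3 by simp
  have yR: "y \<notin> \<Union>R" using 3(4) by simp
  have yF: "pos y \<in> F"
  proof (cases zs)
    case Nil then show ?thesis using 3(5) by simp
  next
    case (Cons z zs')
    then have "{y,z} \<in> rout E \<gamma> F" using wyz by simp
    moreover have "y \<in> \<Union>E" using xyE by blast
    ultimately show ?thesis using vertex_in_F[OF pe _ yR RE fr cR, of "{y,z}"] by blast
  qed
  have "{x,y} \<notin> R" using yR by blast
  then have "path_image (\<gamma> {x,y}) \<subseteq> closure F"
    using edge_in_closure[OF pe xyE _ RE finR F _ yF] by blast
  then have "{x,y} \<in> rout E \<gamma> F" using xyE unfolding rout_def by blast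
  then show ?case using wyz by simp
qed auto

theorem lemma3:
  fixes E :: "'v set set" and w :: "'v set \<Rightarrow> real"
    and pos :: "'v \<Rightarrow> complex" and \<gamma> :: "'v set \<Rightarrow> real \<Rightarrow> complex"
    and Di Di1 :: "'v set set set" and Ri Ri1 :: "'v set set"
    and C :: "'v list" and F :: "complex set" and q v s :: 'v
  assumes "ugraph E" and "gconnected E"
    and "plane_embedding E pos \<gamma>"
    and "\<forall>e\<in>E. w e > 0"
    and "unique_shortest_paths E w"
    and "division E Di1" and "division E Di"
    and "\<forall>R\<in>Di. \<exists>R'\<in>Di1. R \<subseteq> R'"
    and "Ri1 \<in> Di1" and "Ri \<in> Di" and "Ri \<subseteq> Ri1"
    and "simple_cycle Ri1 C" and "face_bounded_by \<gamma> Ri1 C F"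
    and "bnd Di1 Ri1 \<subseteq> set C"
    and "q \<in> bnd Di Ri"
    and "v \<notin> \<Union>Ri1" and "v \<in> \<Union>(rout E \<gamma> F)"
    and "s \<in> bnd Di1 Ri1"
  shows "(v \<in> Vor (rout E \<gamma> F) w (bnd Di1 Ri1) (wdist E w q) s \<longleftrightarrow>
           (\<exists>P P1 P2. shortest_path E w q v P \<and> P = P1 @ s # P2 \<and> set P2 \<inter> bnd Di1 Ri1 = {}))
       \<and> ((\<exists>P P1 P2. shortest_path E w q v P \<and> P = P1 @ s # P2 \<and> set P2 \<inter> bnd Di1 Ri1 = {})
           \<longrightarrow> dw (rout E \<gamma> F) w (wdist E w q) s v = wdist E w q v)"
proof -
  note a = assms
  define B where "B = bnd Di1 Ri1"
  define H where "H = rout E \<gamma> F"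
  define \<omega> where "\<omega> = wdist E w q"
  have pe: "plane_embedding E pos \<gamma>" using a(3) .
  have posE: "\<forall>e\<in>E. w e > 0" using a(4) .
  have finE: "finite E" and edges: "\<forall>e\<in>E. \<exists>x y. x \<noteq> y \<and> e = {x,y}" using a(1) unfolding ugraph_def by auto
  have finV: "finite (\<Union>E)"
  proof (rule finite_Union[OF finE])
    fix e assume "e \<in> E" then show "finite e" using edges by auto
  qed
  have RE: "Ri1 \<subseteq> E" using a(6,9) unfolding division_def by blast
  have finR: "finite Ri1" using RE finE finite_subset by blast
  have HE: "H \<subseteq> E" unfolding H_def rout_def by blast
  have finH: "finite (\<Union>H)" using HE finV by (meson Union_mono finite_subset)
  have posH: "\<forall>e\<in>H. w e > 0" using HE posE by blast
  have cR: "cyc_edges C \<subseteq> Ri1" using a(12) unfolding simple_cycle_def by blast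
  have Fc: "F \<in> components (- img \<gamma> Ri1)"
    using a(13) unfolding face_bounded_by_def by (elim conjE)
  have fr: "frontier F = img \<gamma> (cyc_edges C)"
    using a(13) unfolding face_bounded_by_def by (elim conjE)
  have qR: "q \<in> \<Union>Ri1" using a(15) a(11) unfolding bnd_def by blast
  have qV: "q \<in> \<Union>E" using qR RE by blast
  have vH: "v \<in> \<Union>H" using a(17) H_def by simp
  have vV: "v \<in> \<Union>E" using vH HE by blast
  have BV: "B \<subseteq> \<Union>E" using RE unfolding B_def bnd_def by blast
  have reach: "\<exists>W. walk E W \<and> hd W = x \<and> last W = y" if "x \<in> \<Union>E" "y \<in> \<Union>E" for x y
    using a(2) that unfolding gconnected_def by blast
  have vF: "pos v \<in> F"
  proof -
    obtain e where "e \<in> H" "v \<in> e" using vH by blast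
    then show ?thesis using vertex_in_F[OF pe vV a(16) RE fr cR] H_def by blast
  qed
  have uniq: "P = P'" if "shortest_path E w x y P" "shortest_path E w x y P'" for x y P P'
  proof -
    have "\<forall>x y P P'. shortest_path E w x y P \<and> shortest_path E w x y P' \<longrightarrow> P = P'"
      using a(5) unfolding unique_shortest_paths_def .
    then show ?thesis using that by blast
  qed

  have M: "dw H w \<omega> s0 v = wdist E w q v \<and>
      (\<forall>s'\<in>B. s' \<noteq> s0 \<longrightarrow> lexless (dw H w \<omega> s0 v, - \<omega> s0) (dw H w \<omega> s' v, - \<omega> s'))"
    if sp: "shortest_path E w q v (P1 @ s0 # P2)" and P2B: "set P2 \<inter> B = {}" for P1 s0 P2
  proof -
    define P where "P = P1 @ s0 # P2"
    have wP: "walk E P" and dP: "distinct P" and hP: "hd P = q" and lP: "last P = v"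
      and dqv: "wdist E w q v = ereal (walk_len w P)"
      using sp unfolding shortest_path_def P_def by auto
    have wA: "walk E (P1 @ [s0])" and wS: "walk E (s0 # P2)"
      using wP walk_append[of E P1 s0 P2] unfolding P_def by auto
    have lenP: "walk_len w P = walk_len w (P1 @ [s0]) + walk_len w (s0 # P2)"
      unfolding P_def by (rule walk_len_append)
    have hA: "hd (P1 @ [s0]) = q" using hP unfolding P_def by (cases P1) auto
    have lS: "last (s0 # P2) = v" using lP unfolding P_def by simp
    have P2R: "\<forall>y\<in>set P2. y \<notin> \<Union>Ri1"
    proof
      fix y assume "y \<in> set P2"
      then obtain xa xb where P2e: "P2 = xa @ y # xb" by (meson split_list)
      have "walk E ((P1 @ s0 # xa) @ y # xb)" using wP P2e unfolding P_def by simp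
      then have wy: "walk E (y # xb)" using walk_append[of E "P1 @ s0 # xa" y xb] by simp
      have ly: "last (y # xb) = v" using lS P2e by (cases xb) auto
      have "set (y # xb) \<inter> bnd Di1 Ri1 = {}" using P2B P2e unfolding B_def by auto
      then show "y \<notin> \<Union>Ri1" using walk_stays[OF a(6,9) wy] ly a(16) by auto
    qed
    have wSH: "walk H (s0 # P2)"
      unfolding H_def by (rule suffix_in_rout[OF pe RE finR Fc fr cR wS]) (use P2R lS vF in auto)
    have om0: "\<omega> s0 = ereal (walk_len w (P1 @ [s0]))"
    proof (rule antisym)
      show "\<omega> s0 \<le> ereal (walk_len w (P1 @ [s0]))" unfolding \<omega>_def using wdist_le[OF wA hA] by simp
      show "ereal (walk_len w (P1 @ [s0])) \<le> \<omega> s0" unfolding \<omega>_def wdist_def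
      proof (rule INF_greatest)
        fix W assume "W \<in> {xs. walk E xs \<and> hd xs = q \<and> last xs = s0}"
        then have W: "walk E W" "hd W = q" "last W = s0" by auto
        have c: "walk E (butlast W @ s0 # P2) \<and> walk_len w (butlast W @ s0 # P2) = walk_len w W + walk_len w (s0 # P2)
          \<and> hd (butlast W @ s0 # P2) = hd W \<and> last (butlast W @ s0 # P2) = last (s0 # P2)"
          using walk_concat[OF W(1) wS] W(3) by simp
        then have "wdist E w q v \<le> ereal (walk_len w W + walk_len w (s0 # P2))"
          using wdist_le[of E "butlast W @ s0 # P2" q v w] W lS by simp
        then show "ereal (walk_len w (P1 @ [s0])) \<le> ereal (walk_len w W)" using dqv lenP by simp
      qed
    qed
    have dH0: "wdist H w s0 v = ereal (walk_len w (s0 # P2))"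
    proof (rule antisym)
      show "wdist H w s0 v \<le> ereal (walk_len w (s0 # P2))" using wdist_le[OF wSH _ lS] by simp
      show "ereal (walk_len w (s0 # P2)) \<le> wdist H w s0 v" unfolding wdist_def
      proof (rule INF_greatest)
        fix W assume "W \<in> {xs. walk H xs \<and> hd xs = s0 \<and> last xs = v}"
        then have W: "walk E W" "hd W = s0" "last W = v" using walk_mono[OF _ HE] by auto
        have c: "walk E (butlast (P1 @ [s0]) @ W) \<and> walk_len w (butlast (P1 @ [s0]) @ W) = walk_len w (P1 @ [s0]) + walk_len w W
          \<and> hd (butlast (P1 @ [s0]) @ W) = hd (P1 @ [s0]) \<and> last (butlast (P1 @ [s0]) @ W) = last W"
          using walk_concat[OF wA W(1)] W(2) by simp
        then have "wdist E w q v \<le> ereal (walk_len w (P1 @ [s0]) + walk_len w W)"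
          using wdist_le[of E "butlast (P1 @ [s0]) @ W" q v w] W hA by simp
        then show "ereal (walk_len w (s0 # P2)) \<le> ereal (walk_len w W)" using dqv lenP by simp
      qed
    qed
    have dw0: "dw H w \<omega> s0 v = ereal (walk_len w P)"
      unfolding dw_def om0 dH0 lenP by simp
    have lex: "lexless (dw H w \<omega> s0 v, - \<omega> s0) (dw H w \<omega> s' v, - \<omega> s')" if s'B: "s' \<in> B" "s' \<noteq> s0" for s'
    proof -
      have s'V: "s' \<in> \<Union>E" using s'B BV by blast
      obtain W0 where "walk E W0" "hd W0 = q" "last W0 = s'" using reach[OF qV s'V] by blast
      then obtain W1 where W1: "walk E W1" "hd W1 = q" "last W1 = s'" "\<omega> s' = ereal (walk_len w W1)"
        using exists_shortest[OF finV posE] unfolding \<omega>_def by metis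
      show ?thesis
      proof (cases "\<exists>W. walk H W \<and> hd W = s' \<and> last W = v")
        case False
        then have "wdist H w s' v = \<infinity>" by (rule wdist_empty)
        then have "dw H w \<omega> s' v = \<infinity>" unfolding dw_def W1(4) by simp
        then show ?thesis unfolding lexless_def dw0 by simp
      next
        case True
        then obtain W0' where "walk H W0'" "hd W0' = s'" "last W0' = v" by blast
        then obtain W2 where W2: "walk H W2" "hd W2 = s'" "last W2 = v" "wdist H w s' v = ereal (walk_len w W2)"
          using exists_shortest[OF finH posH] by metis
        have W2E: "walk E W2" using walk_mono[OF W2(1) HE] .
        define W where "W = butlast W1 @ W2"
        have c: "walk E W" "walk_len w W = walk_len w W1 + walk_len w W2" "hd W = q" "last W = v"
          using walk_concat[OF W1(1) W2E, of w] W1 W2 unfolding W_def by auto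
        have dws: "dw H w \<omega> s' v = ereal (walk_len w W1 + walk_len w W2)"
          unfolding dw_def W1(4) W2(4) by simp
        have le: "walk_len w P \<le> walk_len w W" using wdist_le[OF c(1,3,4), of w] dqv by simp
        show ?thesis
        proof (cases "walk_len w P < walk_len w W")
          case True
          then show ?thesis unfolding lexless_def dw0 dws using c(2) by simp
        next
          case False
          then have eq: "walk_len w W = walk_len w P" using le by simp
          have "distinct W"
          proof (rule ccontr)
            assume "\<not> distinct W"
            then obtain W' where "walk E W'" "hd W' = q" "last W' = v" "walk_len w W' < walk_len w W"
              using shorten[OF posE c(1)] c(3,4) by metis
            then show False using wdist_le[of E W' q v w] dqv eq by simp
          qed
          then have "shortest_path E w q v W" unfolding shortest_path_def using c dqv eq by simp
          then have WP: "W = P" using uniq sp unfolding P_def by blast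
          have "s' \<in> set W2" using W2(2) W2(1) by (cases W2) auto
          moreover have "set W2 \<subseteq> set W" unfolding W_def by simp
          ultimately have "s' \<in> set P" using WP by blast
          moreover have "s' \<notin> set P2" using P2B s'B by blast
          ultimately have "s' \<in> set P1" using s'B(2) unfolding P_def by auto
          then obtain X Y where P1e: "P1 = X @ s' # Y" by (meson split_list)
          have e1: "P1 @ [s0] = X @ s' # (Y @ [s0])" using P1e by simp
          have wX: "walk E (X @ [s']) \<and> walk E (s' # Y @ [s0])" using wA walk_append[of E X s' "Y @ [s0]"] e1 by simp
          have hX: "hd (X @ [s']) = q" using hA e1 by (cases X) auto
          have lenA: "walk_len w (P1 @ [s0]) = walk_len w (X @ [s']) + walk_len w (s' # Y @ [s0])"
            using e1 walk_len_append[of w X s' "Y @ [s0]"] by simp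
          have "walk_len w (s' # Y @ [s0]) > 0"
            using walk_len_pos[OF posE, of s' "hd (Y @ [s0])" "tl (Y @ [s0])"] wX by (cases Y) auto
          moreover have "\<omega> s' \<le> ereal (walk_len w (X @ [s']))"
            unfolding \<omega>_def using wdist_le[of E "X @ [s']" q s' w] wX hX by simp
          ultimately have "\<omega> s' < \<omega> s0" unfolding om0 lenA using W1(4) by simp
          then have "- \<omega> s0 < - \<omega> s'" by simp
          moreover have "dw H w \<omega> s0 v = dw H w \<omega> s' v" unfolding dw0 dws using c(2) eq by simp
          ultimately show ?thesis unfolding lexless_def by simp
        qed
      qed
    qed
    show ?thesis using dw0 dqv lex by simp
  qed

  obtain P0 where P0: "walk E P0" "hd P0 = q" "last P0 = v" using reach[OF qV vV] by blast
  obtain P where P: "walk E P" "distinct P" "hd P = q" "last P = v" "wdist E w q v = ereal (walk_len w P)"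
    using exists_shortest[OF finV posE P0] by (elim exE conjE)
  have spP: "shortest_path E w q v P" using P unfolding shortest_path_def by simp
  have "\<exists>x\<in>set P. x \<in> bnd Di1 Ri1" using walk_hits_bnd[OF a(6,9) P(1)] P(3,4) qR a(16) by simp
  then have "\<exists>x\<in>set P. x \<in> B" unfolding B_def .
  then obtain P1 s0 P2 where dec: "P = P1 @ s0 # P2" "s0 \<in> B" "\<forall>z\<in>set P2. z \<notin> B"
    by (rule split_list_last_propE)
  have dec2: "set P2 \<inter> B = {}" using dec(3) by blast
  have sp0: "shortest_path E w q v (P1 @ s0 # P2)" using spP dec(1) by simp

  have part2: "dw H w \<omega> s v = wdist E w q v"
    if ex: "\<exists>P P1 P2. shortest_path E w q v P \<and> P = P1 @ s # P2 \<and> set P2 \<inter> B = {}"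
  proof -
    obtain Q Q1 Q2 where Q: "shortest_path E w q v Q" "Q = Q1 @ s # Q2" "set Q2 \<inter> B = {}"
      using ex by blast
    have "shortest_path E w q v (Q1 @ s # Q2)" using Q(1,2) by simp
    from M[OF this Q(3)] show ?thesis by (elim conjE)
  qed
  have part1: "v \<in> Vor H w B \<omega> s \<longleftrightarrow> (\<exists>P P1 P2. shortest_path E w q v P \<and> P = P1 @ s # P2 \<and> set P2 \<inter> B = {})"
  proof
    assume V: "v \<in> Vor H w B \<omega> s"
    show "\<exists>P P1 P2. shortest_path E w q v P \<and> P = P1 @ s # P2 \<and> set P2 \<inter> B = {}"
    proof (cases "s0 = s")
      case True then show ?thesis using spP dec(1) dec2 by blast
    next
      case False
      have sB: "s \<in> B" using a(18) unfolding B_def .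
      have "\<forall>s'\<in>B. s' \<noteq> s0 \<longrightarrow> lexless (dw H w \<omega> s0 v, - \<omega> s0) (dw H w \<omega> s' v, - \<omega> s')"
        using M[OF sp0 dec2] by (elim conjE)
      then have l1: "lexless (dw H w \<omega> s0 v, - \<omega> s0) (dw H w \<omega> s v, - \<omega> s)"
        using sB False by metis
      have "\<forall>s'\<in>B. s' \<noteq> s \<longrightarrow> lexless (dw H w \<omega> s v, - \<omega> s) (dw H w \<omega> s' v, - \<omega> s')"
        using V unfolding Vor_def by simp
      then have l2: "lexless (dw H w \<omega> s v, - \<omega> s) (dw H w \<omega> s0 v, - \<omega> s0)"
        using dec(2) False by metis
      show ?thesis using l1 l2 unfolding lexless_def by auto
    qed
  next
    assume "\<exists>P P1 P2. shortest_path E w q v P \<and> P = P1 @ s # P2 \<and> set P2 \<inter> B = {}"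
    then obtain Q Q1 Q2 where Q: "shortest_path E w q v Q" "Q = Q1 @ s # Q2" "set Q2 \<inter> B = {}"
      by blast
    have "shortest_path E w q v (Q1 @ s # Q2)" using Q(1,2) by simp
    from M[OF this Q(3)] have "\<forall>s'\<in>B. s' \<noteq> s \<longrightarrow> lexless (dw H w \<omega> s v, - \<omega> s) (dw H w \<omega> s' v, - \<omega> s')"
      by (elim conjE)
    then show "v \<in> Vor H w B \<omega> s" using vH unfolding Vor_def by blast
  qed
  show ?thesis using part1 part2 unfolding B_def H_def \<omega>_def by blast
qed

end
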